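(* Fix $n\ge2$ and a point $H\in\mathcal S_n$, with first currents $H^{(1)},\dots,H^{(n-1)}$. Define the stationary Faà di Bruno basis $\{F^{(j)}\}_{j\in\mathbb Z}$ by $F^{(a)}=H^{(a)}$ for $a=0,\dots,n-1$ (with $H^{(0)}=1$) and $F^{(j+n)}=z^nF^{(j)}$ for all $j\in\mathbb Z$. Let $\widetilde{\mathcal H}_+$ be the span of $\{F^{(j)}\}_{j\ge0}$ and $\widetilde{\mathcal H}_-$ the space of (possibly infinite) combinations of $\{F^{(j)}\}_{j<0}$, so $\mathcal L=\widetilde{\mathcal H}_+\oplus\widetilde{\mathcal H}_-$ with projections $\tilde\pi_\pm$. Then for every $j\ge0$ the current $H^{(j)}$ of the point $H$ equals $\tilde\pi_+(z^j)$, and the restriction of the central system vector field $X_j$ to $\mathcal S_n$, written in the coordinates $(H^{(1)},\dots,H^{(n-1)})$, is $$\frac{\partial H^{(a)}}{\partial t_j}=-\tilde\pi_-\big(H^{(a)}\,\tilde\pi_+(z^j)\big),\qquad a=1,\dots,n-1,\ j\ge1.$$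
   Context: Let $z$ be a formal variable and $\mathcal L$ the space of formal Laurent series $\sum_{j\le N} l_j z^j$ (finitely many positive powers of $z$). Let $\mathcal H$ be the set of sequences $H=(H^{(k)})_{k\ge0}$ of elements of $\mathcal L$ with $H^{(0)}=1$ and, for $k\ge1$, $H^{(k)}=z^k+\sum_{l\ge1}H^k_l z^{-l}$; the coefficients $H^k_l$ are coordinates on $\mathcal H$, and we set $H^0_l=0$. The central system (CS) is the family of vector fields $X_j$, $j\ge1$, on $\mathcal H$, with associated times $t_j$, defined by $$\frac{\partial H^{(k)}}{\partial t_j}=H^{(j+k)}-H^{(j)}H^{(k)}+\sum_{l=1}^{k}H^j_lH^{(k-l)}+\sum_{l=1}^{j}H^k_lH^{(j-l)},\qquad k\ge0.$$ $\mathcal S_n=\{H\in\mathcal H: X_n(H)=0,\ H^{(n)}=z^n\}$; it is invariant under all $X_j$ and every point of it is determined by $(H^{(1)},\dots,H^{(n-1)})$. *)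

theory Defs
  imports "HOL-Computational_Algebra.Formal_Laurent_Series"
begin

(* The space L of formal Laurent series in z with finitely many positive powers of z
   is modelled by complex fls (Laurent series in X with finitely many negative powers)
   via z = X^{-1}, i.e. z = fls_X_inv. *)

definition zvar :: "complex fls" where
  "zvar = fls_X_inv"

definition zpow :: "int \<Rightarrow> complex fls" where
  "zpow m = (if 0 \<le> m then zvar ^ nat m else fls_X ^ nat (- m))"

definition zcoeff :: "complex fls \<Rightarrow> int \<Rightarrow> complex" where
  "zcoeff f j = fls_nth f (- j)"

definition inH :: "(nat \<Rightarrow> complex fls) \<Rightarrow> bool" where
  "inH H \<longleftrightarrow> H 0 = 1 \<and>
     (\<forall>k\<ge>1. \<forall>j::int. 0 \<le> j \<longrightarrow> zcoeff (H k) j = (if j = int k then 1 else 0))"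

(* coordinates H^k_l  (so H^0_l = 0 on \<H>, since H^(0) = 1) *)
definition Hc :: "(nat \<Rightarrow> complex fls) \<Rightarrow> nat \<Rightarrow> nat \<Rightarrow> complex" where
  "Hc H k l = (if k = 0 then 0 else zcoeff (H k) (- int l))"

(* right-hand side of the central system: component k of X_j at H *)
definition CS :: "(nat \<Rightarrow> complex fls) \<Rightarrow> nat \<Rightarrow> nat \<Rightarrow> complex fls" where
  "CS H j k = H (j + k) - H j * H k
      + (\<Sum>l = 1..k. fls_const (Hc H j l) * H (k - l))
      + (\<Sum>l = 1..j. fls_const (Hc H k l) * H (j - l))"

definition inS :: "nat \<Rightarrow> (nat \<Rightarrow> complex fls) \<Rightarrow> bool" where
  "inS n H \<longleftrightarrow> inH H \<and> (\<forall>k. CS H n k = 0) \<and> H n = zpow (int n)"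

definition Fdb :: "nat \<Rightarrow> (nat \<Rightarrow> complex fls) \<Rightarrow> int \<Rightarrow> complex fls" where
  "Fdb n H j = zpow (int n * (j div int n)) * H (nat (j mod int n))"

definition Hplus :: "nat \<Rightarrow> (nat \<Rightarrow> complex fls) \<Rightarrow> complex fls set" where
  "Hplus n H = {f. \<exists>S c. finite S \<and> (\<forall>j\<in>S. 0 \<le> j) \<and>
                        f = (\<Sum>j\<in>S. fls_const (c j) * Fdb n H j)}"

(* possibly infinite combinations of F^(j), j < 0, taken coefficientwise
   (only finitely many F^(j), j<0, contribute to a given coefficient) *)
definition Hminus :: "nat \<Rightarrow> (nat \<Rightarrow> complex fls) \<Rightarrow> complex fls set" where
  "Hminus n H = {f. \<exists>c :: int \<Rightarrow> complex. \<forall>m.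
       zcoeff f m = (\<Sum>j\<in>{j. j < 0 \<and> zcoeff (Fdb n H j) m \<noteq> 0}. c j * zcoeff (Fdb n H j) m)}"

definition piplus :: "nat \<Rightarrow> (nat \<Rightarrow> complex fls) \<Rightarrow> complex fls \<Rightarrow> complex fls" where
  "piplus n H f = (THE g. g \<in> Hplus n H \<and> f - g \<in> Hminus n H)"

definition piminus :: "nat \<Rightarrow> (nat \<Rightarrow> complex fls) \<Rightarrow> complex fls \<Rightarrow> complex fls" where
  "piminus n H f = f - piplus n H f"

end

theory Submission
  imports Defs
begin

lemma zpow_shift: "zpow p = fls_shift p 1"
  by (auto simp: zpow_def zvar_def fls_X_inv_power_conv_shift_1 fls_X_power_conv_shift_1)

lemma zpow_add: "zpow (p + q) = zpow p * zpow q"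
  by (simp add: zpow_shift fls_shifted_times_simps add.commute)

lemma zpow_0[simp]: "zpow 0 = 1"
  by (simp add: zpow_def)

lemma zcoeff_zpow_mult: "zcoeff (zpow p * g) m = zcoeff g (m - p)"
  by (simp add: zpow_shift fls_shifted_times_simps zcoeff_def)

lemma zcoeff_zpow: "zcoeff (zpow p) m = (if m = p then 1 else 0)"
  using zcoeff_zpow_mult[of p 1 m] by (simp add: zcoeff_def)

lemma zcoeff_add[simp]: "zcoeff (f + g) m = zcoeff f m + zcoeff g m"
  by (simp add: zcoeff_def)
lemma zcoeff_diff[simp]: "zcoeff (f - g) m = zcoeff f m - zcoeff g m"
  by (simp add: zcoeff_def)
lemma zcoeff_uminus[simp]: "zcoeff (- g) m = - zcoeff g m"
  by (simp add: zcoeff_def)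
lemma zcoeff_const_mult[simp]: "zcoeff (fls_const c * g) m = c * zcoeff g m"
  by (simp add: zcoeff_def)
lemma zcoeff_sum: "zcoeff (\<Sum>x\<in>A. f x) m = (\<Sum>x\<in>A. zcoeff (f x) m)"
  by (simp add: zcoeff_def fls_nth_sum)
lemma zcoeff_1: "zcoeff 1 m = (if m = 0 then 1 else 0)"
  by (simp add: zcoeff_def)

lemma zcoeff_eqI: "(\<And>m. zcoeff f m = zcoeff g m) \<Longrightarrow> f = g"
  unfolding zcoeff_def fls_eq_iff by (metis minus_minus)

lemma inH_coeff: "inH H \<Longrightarrow> 0 \<le> m \<Longrightarrow> zcoeff (H a) m = (if m = int a then 1 else 0)"
  unfolding inH_def
  by (cases "a = 0") (auto simp: zcoeff_1)

lemma inH_coeff_gt: "inH H \<Longrightarrow> int a < m \<Longrightarrow> zcoeff (H a) m = 0"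
  using inH_coeff[of H m a] by auto

lemma Fdb_coeff:
  assumes "inH H" "n > 0"
  shows "m > j \<Longrightarrow> zcoeff (Fdb n H j) m = 0" and "zcoeff (Fdb n H j) j = 1"
proof -
  have e: "j = int n * (j div int n) + j mod int n" by simp
  have p: "0 \<le> j mod int n" using assms by simp
  show "m > j \<Longrightarrow> zcoeff (Fdb n H j) m = 0"
    unfolding Fdb_def zcoeff_zpow_mult
    apply (rule inH_coeff_gt[OF assms(1)]) using e p by linarith
  show "zcoeff (Fdb n H j) j = 1"
    unfolding Fdb_def zcoeff_zpow_mult using inH_coeff[OF assms(1), of "j - int n * (j div int n)" "nat (j mod int n)"]
    using e p by (simp add: algebra_simps)
qed


definition neg :: "complex fls \<Rightarrow> bool" where
  "neg f \<longleftrightarrow> (\<forall>m\<ge>0. zcoeff f m = 0)"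

function cc :: "(int \<Rightarrow> int \<Rightarrow> complex) \<Rightarrow> (int \<Rightarrow> complex) \<Rightarrow> nat \<Rightarrow> complex" where
  "cc e g k = g (- int k) - (\<Sum>i\<in>{1..<k}. cc e g i * e (- int i) (- int k))"
  by auto
termination by (relation "measure (\<lambda>(e,g,k). k)") auto

declare cc.simps[simp del]

lemma Hminus_sub: "inH H \<Longrightarrow> n > 0 \<Longrightarrow> f \<in> Hminus n H \<Longrightarrow> neg f"
  unfolding Hminus_def neg_def
proof clarify
  fix c m assume h: "inH H" "n > 0" "\<forall>m. zcoeff f m = (\<Sum>j\<in>{j. j < 0 \<and> zcoeff (Fdb n H j) m \<noteq> 0}. c j * zcoeff (Fdb n H j) m)"
    "(0::int) \<le> m"
  have "{j. j < 0 \<and> zcoeff (Fdb n H j) m \<noteq> 0} = {}"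
    using Fdb_coeff(1)[OF h(1,2)] h(4) by force
  then show "zcoeff f m = 0" using h(3) by simp
qed

lemma Hminus_sup:
  assumes H: "inH H" "n > 0" and f: "neg f"
  shows "f \<in> Hminus n H"
proof -
  define e where "e = (\<lambda>j m. zcoeff (Fdb n H j) m)"
  define c where "c = (\<lambda>j::int. cc e (zcoeff f) (nat (- j)))"
  have e0: "m > j \<Longrightarrow> e j m = 0" for j m using Fdb_coeff(1)[OF H] by (simp add: e_def)
  have e1: "e j j = 1" for j using Fdb_coeff(2)[OF H] by (simp add: e_def)
  have "zcoeff f m = (\<Sum>j\<in>{j. j < 0 \<and> e j m \<noteq> 0}. c j * e j m)" for m
  proof (cases "m \<ge> 0")
    case True
    have "{j. j < 0 \<and> e j m \<noteq> 0} = {}" using e0 True by force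
    then show ?thesis using f True by (simp add: neg_def)
  next
    case False
    define k where "k = nat (- m)"
    have mk: "m = - int k" and k1: "k \<ge> 1" using False by (auto simp: k_def)
    have "(\<Sum>j\<in>{j. j < 0 \<and> e j m \<noteq> 0}. c j * e j m) = (\<Sum>j\<in>{m..-1}. c j * e j m)"
      apply (rule sum.mono_neutral_left)
        apply simp
      proof
        fix j assume "j \<in> {j. j < 0 \<and> e j m \<noteq> 0}"
        then have "j < 0" "\<not> m > j" using e0 by auto
        then show "j \<in> {m..-1}" by auto
      qed auto
    also have "{m..-1} = insert m ((\<lambda>i. - int i) ` {1..<k})"
    proof (rule set_eqI, rule iffI)
      fix j assume j: "j \<in> {m..-1}"
      show "j \<in> insert m ((\<lambda>i. - int i) ` {1..<k})"
      proof (cases "j = m")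
        case False
        then have "j = - int (nat (-j))" "nat (-j) \<in> {1..<k}" using j mk by auto
        then show ?thesis by blast
      qed simp
    qed (use mk k1 in auto)
    also have "(\<Sum>j\<in>\<dots>. c j * e j m) = c m * e m m + (\<Sum>j\<in>(\<lambda>i. - int i) ` {1..<k}. c j * e j m)"
      by (rule sum.insert) (use mk in auto)
    also have "(\<Sum>j\<in>(\<lambda>i. - int i) ` {1..<k}. c j * e j m) = (\<Sum>i\<in>{1..<k}. c (- int i) * e (- int i) m)"
      by (subst sum.reindex) (auto simp: inj_on_def)
    also have "\<dots> = (\<Sum>i\<in>{1..<k}. cc e (zcoeff f) i * e (- int i) (- int k))"
      by (simp add: c_def mk)
    finally show ?thesis using e1 by (simp add: c_def mk cc.simps[of e _ k])
  qed
  then show ?thesis unfolding Hminus_def e_def by blast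
qed

lemma Hminus_iff: "inH H \<Longrightarrow> n > 0 \<Longrightarrow> f \<in> Hminus n H \<longleftrightarrow> neg f"
  using Hminus_sub Hminus_sup by blast


lemma Hplus_0: "0 \<in> Hplus n H"
  unfolding Hplus_def by (rule CollectI, rule exI[of _ "{}"]) auto

lemma Hplus_F: "0 \<le> j \<Longrightarrow> Fdb n H j \<in> Hplus n H"
  unfolding Hplus_def by (rule CollectI, rule exI[of _ "{j}"], rule exI[of _ "\<lambda>_. 1"]) auto

lemma Hplus_smult: "f \<in> Hplus n H \<Longrightarrow> fls_const d * f \<in> Hplus n H"
  unfolding Hplus_def
proof clarify
  fix S :: "int set" and c :: "int \<Rightarrow> complex" assume "finite S" "\<forall>j\<in>S. 0 \<le> j"
  then show "\<exists>S' c'. finite S' \<and> (\<forall>j\<in>S'. 0 \<le> j) \<and> fls_const d * (\<Sum>j\<in>S. fls_const (c j) * Fdb n H j) = (\<Sum>j\<in>S'. fls_const (c' j) * Fdb n H j)"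
    by (intro exI[of _ S] exI[of _ "\<lambda>j. d * c j"]) (simp add: sum_distrib_left mult.assoc flip: fls_const_mult_const)
qed

lemma Hplus_add: "f \<in> Hplus n H \<Longrightarrow> g \<in> Hplus n H \<Longrightarrow> f + g \<in> Hplus n H"
  unfolding Hplus_def
proof clarify
  fix S T :: "int set" and c d :: "int \<Rightarrow> complex" assume S: "finite S" "\<forall>j\<in>S. 0 \<le> j" and T: "finite T" "\<forall>j\<in>T. 0 \<le> j"
  define c' where "c' = (\<lambda>j. if j \<in> S then c j else 0)"
  define d' where "d' = (\<lambda>j. if j \<in> T then d j else 0)"
  have 1: "(\<Sum>j\<in>S. fls_const (c j) * Fdb n H j) = (\<Sum>j\<in>S \<union> T. fls_const (c' j) * Fdb n H j)"
    by (rule sum.mono_neutral_cong_left) (use S T in \<open>auto simp: c'_def\<close>)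
  have 2: "(\<Sum>j\<in>T. fls_const (d j) * Fdb n H j) = (\<Sum>j\<in>S \<union> T. fls_const (d' j) * Fdb n H j)"
    by (rule sum.mono_neutral_cong_left) (use S T in \<open>auto simp: d'_def\<close>)
  show "\<exists>S' e. finite S' \<and> (\<forall>j\<in>S'. 0 \<le> j) \<and> (\<Sum>j\<in>S. fls_const (c j) * Fdb n H j) + (\<Sum>j\<in>T. fls_const (d j) * Fdb n H j) = (\<Sum>j\<in>S'. fls_const (e j) * Fdb n H j)"
    apply (intro exI[of _ "S \<union> T"] exI[of _ "\<lambda>j. c' j + d' j"])
    using S T by (auto simp: 1 2 distrib_right sum.distrib simp flip: fls_plus_const)
qed

lemma Hplus_diff: "f \<in> Hplus n H \<Longrightarrow> g \<in> Hplus n H \<Longrightarrow> f - g \<in> Hplus n H"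
  using Hplus_add[of f n H "fls_const (-1) * g"] Hplus_smult[of g n H "-1"]
  by (simp flip: fls_const_mult_const)

lemma Hplus_sum: "(\<And>x. x \<in> A \<Longrightarrow> f x \<in> Hplus n H) \<Longrightarrow> (\<Sum>x\<in>A. f x) \<in> Hplus n H"
  by (induction A rule: infinite_finite_induct) (auto simp: Hplus_0 Hplus_add)

lemma Fdb_shift: "n > 0 \<Longrightarrow> zpow (int n) * Fdb n H j = Fdb n H (j + int n)"
proof -
  assume n: "n > 0"
  have "(j + int n) div int n = j div int n + 1" "(j + int n) mod int n = j mod int n"
    using n by simp_all
  then show ?thesis unfolding Fdb_def
    by (simp add: mult.assoc distrib_left flip: zpow_add) (simp add: add.commute)
qed

lemma Hplus_zn: "n > 0 \<Longrightarrow> f \<in> Hplus n H \<Longrightarrow> zpow (int n) * f \<in> Hplus n H"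
  unfolding Hplus_def
proof clarify
  fix S :: "int set" and c :: "int \<Rightarrow> complex" assume n: "n > 0" and S: "finite S" "\<forall>j\<in>S. 0 \<le> j"
  have "zpow (int n) * (\<Sum>j\<in>S. fls_const (c j) * Fdb n H j) = (\<Sum>j\<in>S. fls_const (c j) * Fdb n H (j + int n))"
    by (simp add: sum_distrib_left Fdb_shift[OF n, symmetric] mult.left_commute)
  also have "\<dots> = (\<Sum>j\<in>(\<lambda>j. j + int n) ` S. fls_const (c (j - int n)) * Fdb n H j)"
    by (subst sum.reindex) (auto simp: inj_on_def)
  finally show "\<exists>S' c'. finite S' \<and> (\<forall>j\<in>S'. 0 \<le> j) \<and> zpow (int n) * (\<Sum>j\<in>S. fls_const (c j) * Fdb n H j) = (\<Sum>j\<in>S'. fls_const (c' j) * Fdb n H j)"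
    using S by (intro exI[of _ "(\<lambda>j. j + int n) ` S"] exI[of _ "\<lambda>j. c (j - int n)"]) auto
qed

lemma Hplus_neg_zero:
  assumes H: "inH H" "n > 0" and g: "g \<in> Hplus n H" "neg g"
  shows "g = 0"
proof -
  obtain S c where S: "finite S" "\<forall>j\<in>S. 0 \<le> j" and gdef: "g = (\<Sum>j\<in>S. fls_const (c j) * Fdb n H j)"
    using g(1) unfolding Hplus_def by blast
  have "\<forall>j\<in>S. c j = 0"
  proof (rule ccontr)
    assume "\<not> ?thesis"
    then have ne: "{j\<in>S. c j \<noteq> 0} \<noteq> {}" by auto
    define M where "M = Max {j\<in>S. c j \<noteq> 0}"
    have fin: "finite {j\<in>S. c j \<noteq> 0}" using S by auto
    have M: "M \<in> S" "c M \<noteq> 0" using Max_in[OF fin ne] by (auto simp: M_def)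
    have Mmax: "j \<in> S \<Longrightarrow> c j \<noteq> 0 \<Longrightarrow> j \<le> M" for j using Max_ge[OF fin] by (auto simp: M_def)
    have "zcoeff g M = (\<Sum>j\<in>S. c j * zcoeff (Fdb n H j) M)"
      by (simp add: gdef zcoeff_sum)
    also have "\<dots> = c M * zcoeff (Fdb n H M) M"
    proof -
      have "(\<Sum>j\<in>S - {M}. c j * zcoeff (Fdb n H j) M) = 0"
      proof (rule sum.neutral, rule ballI)
        fix j assume j': "j \<in> S - {M}"
        then have j: "j \<in> S" "j \<noteq> M" by auto
        show "c j * zcoeff (Fdb n H j) M = 0"
        proof (cases "c j = 0")
          case False
          then have "j < M" using Mmax j by force
          then show ?thesis using Fdb_coeff(1)[OF H] by simp
        qed simp
      qed
      then show ?thesis by (simp add: sum.remove[OF S(1) M(1)])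
    qed
    also have "\<dots> = c M" using Fdb_coeff(2)[OF H] by simp
    finally have "zcoeff g M = c M" .
    moreover have "zcoeff g M = 0" using g(2) S M by (auto simp: neg_def)
    ultimately show False using M by simp
  qed
  then show ?thesis by (simp add: gdef)
qed

lemma exists_dec:
  assumes H: "inH H" "n > 0"
  shows "\<forall>f. (\<forall>m\<ge>int N. zcoeff f m = 0) \<longrightarrow> (\<exists>g\<in>Hplus n H. neg (f - g))"
proof (induction N)
  case 0
  show ?case by (intro allI impI bexI[of _ 0]) (auto simp: neg_def Hplus_0)
next
  case (Suc N)
  show ?case
  proof clarify
    fix f assume f: "\<forall>m\<ge>int (Suc N). zcoeff f m = 0"
    define f' where "f' = f - fls_const (zcoeff f (int N)) * Fdb n H (int N)"
    have "\<forall>m\<ge>int N. zcoeff f' m = 0"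
    proof clarify
      fix m assume m: "int N \<le> m"
      show "zcoeff f' m = 0"
      proof (cases "m = int N")
        case True then show ?thesis using Fdb_coeff(2)[OF H] by (simp add: f'_def)
      next
        case False then show ?thesis using Fdb_coeff(1)[OF H, of "int N" m] f m by (simp add: f'_def)
      qed
    qed
    then obtain g' where g': "g' \<in> Hplus n H" "neg (f' - g')" using Suc by blast
    show "\<exists>g\<in>Hplus n H. neg (f - g)"
      apply (rule bexI[of _ "g' + fls_const (zcoeff f (int N)) * Fdb n H (int N)"])
      using g' by (auto simp: f'_def diff_diff_eq add.commute intro!: Hplus_add Hplus_smult Hplus_F)
  qed
qed

lemma exists_dec2:
  assumes H: "inH H" "n > 0"
  shows "\<exists>g\<in>Hplus n H. neg (f - g)"
proof -
  have "\<forall>m\<ge>int (nat (1 - fls_subdegree f)). zcoeff f m = 0"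
    by (auto simp: zcoeff_def)
  then show ?thesis using exists_dec[OF H] by blast
qed

lemma unique_dec:
  assumes H: "inH H" "n > 0"
  shows "\<exists>!g. g \<in> Hplus n H \<and> f - g \<in> Hminus n H"
proof -
  obtain g where g: "g \<in> Hplus n H" "neg (f - g)" using exists_dec2[OF H] by blast
  show ?thesis
  proof (rule ex1I[of _ g])
    show "g \<in> Hplus n H \<and> f - g \<in> Hminus n H" using g Hminus_iff[OF H] by blast
    fix g' assume g': "g' \<in> Hplus n H \<and> f - g' \<in> Hminus n H"
    have "g' - g \<in> Hplus n H" using g g' Hplus_diff by blast
    moreover have "neg (g' - g)" using g g' Hminus_iff[OF H, of "f - g'"]
      by (simp add: neg_def)
    ultimately show "g' = g" using Hplus_neg_zero[OF H] by fastforce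
  qed
qed

lemma piplus_eq:
  assumes H: "inH H" "n > 0" and g: "g \<in> Hplus n H" "neg (f - g)"
  shows "piplus n H f = g"
  unfolding piplus_def
  using unique_dec[OF H, of f] g Hminus_iff[OF H] by (metis (no_types, lifting) the_equality)


lemma sum_delta_aux:
  assumes "0 \<le> m"
  shows "(\<Sum>l=1..a. c l * (if m = int (a - l) then 1 else 0)) = (if m < int a then c (nat (int a - m)) else (0::complex))"
proof -
  have "(\<Sum>l=1..a. c l * (if m = int (a - l) then 1 else 0)) = (\<Sum>l\<in>{1..a}. if l = nat (int a - m) then c l else 0)"
    by (rule sum.cong) (use assms in auto)
  also have "\<dots> = (if m < int a then c (nat (int a - m)) else 0)"
    by (subst sum.delta) (use assms in auto)
  finally show ?thesis .
qed

lemma neg_mult: "neg f \<Longrightarrow> neg g \<Longrightarrow> neg (f * g)"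
proof -
  assume f: "neg f" and g: "neg g"
  show "neg (f * g)"
  proof (cases "f = 0 \<or> g = 0")
    case True then show ?thesis by (auto simp: neg_def zcoeff_def)
  next
    case False
    have sd: "1 \<le> fls_subdegree h" if "h \<noteq> 0" "neg h" for h
    proof (rule fls_subdegree_geI[OF that(1)])
      fix k :: int assume "k < 1"
      then have "0 \<le> - k" by simp
      then have "zcoeff h (- k) = 0" using that(2) by (simp add: neg_def)
      then show "fls_nth h k = 0" by (simp add: zcoeff_def)
    qed
    have "1 \<le> fls_subdegree f" using sd False f by blast
    moreover have "1 \<le> fls_subdegree g" using sd False g by blast
    ultimately show ?thesis unfolding neg_def zcoeff_def
      by (auto intro!: fls_times_nth_eq0)
  qed
qed

lemma Hk_split:
  assumes H: "inH H" and k: "k \<ge> 1"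
  shows "zcoeff (H k - zpow (int k)) m = (if m < 0 then Hc H k (nat (- m)) else 0)"
  using inH_coeff[OF H, of m k] k by (auto simp: zcoeff_zpow Hc_def)

lemma neg_Hk: "inH H \<Longrightarrow> neg (H k - zpow (int k))"
  using inH_coeff[of H _ k] by (auto simp: neg_def zcoeff_zpow)

lemma CS_neg:
  assumes H: "inH H" and j: "j \<ge> 1" and a: "a \<ge> 1"
  shows "neg (CS H j a)"
  unfolding neg_def
proof clarify
  fix m :: int assume m: "0 \<le> m"
  define Nj where "Nj = H j - zpow (int j)"
  define Na where "Na = H a - zpow (int a)"
  have prod: "H j * H a = zpow (int j + int a) + zpow (int j) * Na + zpow (int a) * Nj + Nj * Na"
    by (simp add: Nj_def Na_def algebra_simps zpow_add)
  have nn: "zcoeff (Nj * Na) m = 0"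
    using neg_mult[OF neg_Hk[OF H, of j] neg_Hk[OF H, of a]] m by (simp add: neg_def Nj_def Na_def)
  have c1: "zcoeff (zpow (int j) * Na) m = (if m < int j then Hc H a (nat (int j - m)) else 0)"
    unfolding zcoeff_zpow_mult Na_def Hk_split[OF H a] by auto
  have c2: "zcoeff (zpow (int a) * Nj) m = (if m < int a then Hc H j (nat (int a - m)) else 0)"
    unfolding zcoeff_zpow_mult Nj_def Hk_split[OF H j] by auto
  have s1: "zcoeff (\<Sum>l = 1..a. fls_const (Hc H j l) * H (a - l)) m = (if m < int a then Hc H j (nat (int a - m)) else 0)"
    unfolding zcoeff_sum zcoeff_const_mult inH_coeff[OF H m] by (rule sum_delta_aux[OF m])
  have s2: "zcoeff (\<Sum>l = 1..j. fls_const (Hc H a l) * H (j - l)) m = (if m < int j then Hc H a (nat (int j - m)) else 0)"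
    unfolding zcoeff_sum zcoeff_const_mult inH_coeff[OF H m] by (rule sum_delta_aux[OF m])
  have h: "zcoeff (H (j + a)) m = zcoeff (zpow (int j + int a)) m"
    unfolding inH_coeff[OF H m] zcoeff_zpow by simp
  show "zcoeff (CS H j a) m = 0"
    unfolding CS_def zcoeff_add zcoeff_diff prod s1 s2 c1 c2 nn h by simp
qed


lemma H_in_Hplus:
  assumes n: "n \<ge> 1" and S: "inS n H"
  shows "H k \<in> Hplus n H"
proof (induction k rule: less_induct)
  case (less k)
  have H: "inH H" and Hn: "H n = zpow (int n)" and cs: "\<And>k. CS H n k = 0" using S by (auto simp: inS_def)
  have low: "H i \<in> Hplus n H" if "i < n" for i
  proof -
    have "Fdb n H (int i) = H i" using that by (simp add: Fdb_def)
    then show ?thesis using Hplus_F[of "int i" n H] by simp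
  qed
  show ?case
  proof (cases "k < n")
    case True then show ?thesis using low by blast
  next
    case False
    then obtain k' where k': "k = n + k'" by (metis le_add_diff_inverse not_le)
    have hc0: "Hc H n l = 0" if "l \<ge> 1" for l
      using n that by (simp add: Hc_def Hn zcoeff_zpow)
    have "(\<Sum>l = 1..k'. fls_const (Hc H n l) * H (k' - l)) = 0"
      by (rule sum.neutral) (simp add: hc0)
    then have rec: "H (n + k') = zpow (int n) * H k' - (\<Sum>l = 1..n. fls_const (Hc H k' l) * H (n - l))"
      using cs[of k'] unfolding CS_def Hn by (simp add: algebra_simps)
    have "k' < k" using k' n by simp
    then have "zpow (int n) * H k' \<in> Hplus n H" using less Hplus_zn n by simp
    moreover have "(\<Sum>l = 1..n. fls_const (Hc H k' l) * H (n - l)) \<in> Hplus n H"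
      by (rule Hplus_sum) (use low n in \<open>auto intro!: Hplus_smult\<close>)
    ultimately show ?thesis unfolding k' rec by (rule Hplus_diff)
  qed
qed

theorem mainTheorem9:
  fixes n :: nat and H :: "nat \<Rightarrow> complex fls"
  assumes "n \<ge> 2" and "inS n H"
  shows "(\<forall>f. \<exists>!g. g \<in> Hplus n H \<and> f - g \<in> Hminus n H)
         \<and> (\<forall>j. H j = piplus n H (zpow (int j)))
         \<and> (\<forall>a\<in>{1..n-1}. \<forall>j\<ge>1.
               CS H j a = - piminus n H (H a * piplus n H (zpow (int j))))"
proof -
  have H: "inH H" and n0: "n > 0" and n1: "n \<ge> 1" using assms by (auto simp: inS_def)
  have P1: "\<forall>f. \<exists>!g. g \<in> Hplus n H \<and> f - g \<in> Hminus n H" using unique_dec[OF H n0] by blast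
  have P2: "H j = piplus n H (zpow (int j))" for j
  proof -
    have "neg (zpow (int j) - H j)" using neg_Hk[OF H, of j] by (simp add: neg_def)
    then show ?thesis using piplus_eq[OF H n0 H_in_Hplus[OF n1 assms(2)]] by metis
  qed
  have P3: "CS H j a = - piminus n H (H a * piplus n H (zpow (int j)))" if a: "a \<ge> 1" and j: "j \<ge> 1" for a j
  proof -
    define R where "R = H (j + a) + (\<Sum>l = 1..a. fls_const (Hc H j l) * H (a - l))
      + (\<Sum>l = 1..j. fls_const (Hc H a l) * H (j - l))"
    have cs: "CS H j a = R - H a * H j" by (simp add: CS_def R_def algebra_simps)
    have R: "R \<in> Hplus n H" unfolding R_def
      by (intro Hplus_add Hplus_sum Hplus_smult H_in_Hplus[OF n1 assms(2)])
    have "neg (H a * H j - R)" using CS_neg[OF H j a] cs by (simp add: neg_def)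
    then have "piplus n H (H a * H j) = R" using piplus_eq[OF H n0 R] by blast
    then show ?thesis by (simp add: piminus_def cs flip: P2)
  qed
  show ?thesis using P1 P2 P3 by auto
qed

end
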